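(* Let $n \ge 1$, let $\mathbf{W}_1, \mathbf{W}_2 \in \mathbb{R}^{n\times n}$, let $\mathbf{x}, \mathbf{y} \in \mathbb{R}^n$, and let $p \in [0,1]$ with $p \neq \tfrac12$. Define $$L_p^{AID} = \mathbb{E}\big[\|\mathbf{W}_2\, \mathrm{AID}_p(\mathbf{W}_1\mathbf{x}) - \mathbf{y}\|_2^2\big],\qquad L_p = \|\mathbf{W}_2\, r_p(\mathbf{W}_1\mathbf{x}) - \mathbf{y}\|_2^2,$$ $$R_p = \Big\|\mathbf{W}_2\big(\tfrac12 \mathbf{W}_1\mathbf{x}\big) - \mathbf{W}_2\, r_p(\mathbf{W}_1\mathbf{x})\Big\|_2^2,$$ where the expectation is over the randomness of $\mathrm{AID}_p$. Then $$L_p^{AID} \ge L_p + \frac{4p(1-p)}{n(2p-1)^2}\, R_p.$$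
   Context: For $\mathbf{v} = (v_1,\dots,v_n)\in\mathbb{R}^n$, $\mathrm{AID}_p(\mathbf{v})$ is the random vector with coordinates $\mathrm{AID}_p(\mathbf{v})_i = p_i v_i$ if $v_i \ge 0$ and $(1-p_i)v_i$ if $v_i<0$, where $p_1,\dots,p_n$ are independent $\mathrm{Bernoulli}(p)$ random variables (equivalently, dropout with rate $1-p$ on nonnegative entries and rate $p$ on negative entries, without rescaling). The modified leaky ReLU $r_p$ acts coordinatewise by $r_p(x) = \tfrac12 x + (p - \tfrac12)|x|$, i.e. $r_p(x) = p x$ for $x\ge 0$ and $(1-p)x$ for $x<0$ (this is the mean of $\mathrm{AID}_p$). $\|\cdot\|_2$ is the Euclidean norm. *)

theory Defs
  imports "HOL-Analysis.Analysis" "HOL-Probability.Probability"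
begin

text \<open>The mask b i = True means the Bernoulli variable p_i equals 1.\<close>
definition AID :: "('n::finite \<Rightarrow> bool) \<Rightarrow> real ^ 'n \<Rightarrow> real ^ 'n" where
  "AID b v = (\<chi> i. if v $ i \<ge> 0 then (if b i then 1 else 0) * v $ i
                      else (1 - (if b i then 1 else 0)) * v $ i)"

definition bern_mask :: "real \<Rightarrow> ('n::finite \<Rightarrow> bool) pmf" where
  "bern_mask p = Pi_pmf UNIV False (\<lambda>_. bernoulli_pmf p)"

definition rp :: "real \<Rightarrow> real \<Rightarrow> real" where
  "rp p x = x / 2 + (p - 1/2) * \<bar>x\<bar>"

definition rpv :: "real \<Rightarrow> real ^ 'n \<Rightarrow> real ^ 'n" where
  "rpv p v = (\<chi> i. rp p (v $ i))"

end

theory Submission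
  imports Defs
begin

lemma E_sum:
  fixes M :: "('a::finite) pmf" and f :: "'a \<Rightarrow> real"
  shows "measure_pmf.expectation M f = (\<Sum>b\<in>UNIV. pmf M b * f b)"
  by (subst integral_measure_pmf_real[of UNIV]) (auto simp: mult.commute)

lemma S1: fixes M :: "('a::finite) pmf" shows "(\<Sum>b\<in>UNIV. pmf M b) = 1"
  by (rule sum_pmf_eq_1) auto

lemma norm2: "(norm (u::real^'n))\<^sup>2 = (\<Sum>j\<in>UNIV. (u$j)\<^sup>2)"
  unfolding power2_norm_eq_inner inner_vec_def by (simp add: power2_eq_square)

lemma E2:
  fixes g h :: "bool \<Rightarrow> real" and i k :: "'n::finite"
  assumes "0 \<le> p" "p \<le> 1" "i \<noteq> k" "\<And>c. g c \<ge> 0" "\<And>c. h c \<ge> 0"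
  shows "measure_pmf.expectation (bern_mask p :: ('n \<Rightarrow> bool) pmf) (\<lambda>b. g (b i) * h (b k))
     = (g True * p + g False * (1 - p)) * (h True * p + h False * (1 - p))"
proof -
  define f where "f = (\<lambda>x c. if x = i then g c else if x = k then h c else (1::real))"
  have pr: "(\<Prod>x\<in>UNIV. f x (b x)) = g (b i) * h (b k)" for b :: "'n \<Rightarrow> bool"
  proof -
    have "(\<Prod>x\<in>UNIV. f x (b x)) = (\<Prod>x\<in>{i,k}. f x (b x))"
      by (rule prod.mono_neutral_right) (auto simp: f_def)
    also have "\<dots> = g (b i) * h (b k)" using assms(3) by (simp add: f_def)
    finally show ?thesis .
  qed
  have "measure_pmf.expectation (bern_mask p :: ('n \<Rightarrow> bool) pmf) (\<lambda>b. \<Prod>x\<in>UNIV. f x (b x))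
     = (\<Prod>x\<in>UNIV. measure_pmf.expectation (bernoulli_pmf p) (\<lambda>v. f x v))"
    unfolding bern_mask_def
    by (rule expectation_prod_Pi_pmf) (auto simp: f_def assms integrable_measure_pmf_finite)
  also have "\<dots> = (\<Prod>x\<in>UNIV. (f x True * p + f x False * (1 - p)))"
    using assms by simp
  also have "\<dots> = (g True * p + g False * (1 - p)) * (h True * p + h False * (1 - p))"
    using pr[of "\<lambda>x. True"] pr[of "\<lambda>x. False"]
  proof -
    have "(\<Prod>x\<in>UNIV. (f x True * p + f x False * (1 - p))) = (\<Prod>x\<in>{i,k}. (f x True * p + f x False * (1 - p)))"
      by (rule prod.mono_neutral_right) (auto simp: f_def)
    then show ?thesis using assms(3) by (simp add: f_def)
  qed
  finally show ?thesis by (simp add: pr)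
qed

lemma E1:
  fixes g :: "bool \<Rightarrow> real" and i :: "'n::finite"
  assumes "0 \<le> p" "p \<le> 1" "\<And>c. g c \<ge> 0"
  shows "measure_pmf.expectation (bern_mask p :: ('n \<Rightarrow> bool) pmf) (\<lambda>b. g (b i))
     = g True * p + g False * (1 - p)"
proof -
  define f where "f = (\<lambda>x c. if x = i then g c else (1::real))"
  have pr: "(\<Prod>x\<in>UNIV. f x (b x)) = g (b i)" for b :: "'n \<Rightarrow> bool"
  proof -
    have "(\<Prod>x\<in>UNIV. f x (b x)) = (\<Prod>x\<in>{i}. f x (b x))"
      by (rule prod.mono_neutral_right) (auto simp: f_def)
    then show ?thesis by (simp add: f_def)
  qed
  have "measure_pmf.expectation (bern_mask p :: ('n \<Rightarrow> bool) pmf) (\<lambda>b. \<Prod>x\<in>UNIV. f x (b x))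
     = (\<Prod>x\<in>UNIV. measure_pmf.expectation (bernoulli_pmf p) (\<lambda>v. f x v))"
    unfolding bern_mask_def
    by (rule expectation_prod_Pi_pmf) (auto simp: f_def assms integrable_measure_pmf_finite)
  also have "\<dots> = (\<Prod>x\<in>UNIV. (f x True * p + f x False * (1 - p)))"
    using assms by simp
  also have "\<dots> = g True * p + g False * (1 - p)"
  proof -
    have "(\<Prod>x\<in>UNIV. (f x True * p + f x False * (1 - p))) = (\<Prod>x\<in>{i}. (f x True * p + f x False * (1 - p)))"
      by (rule prod.mono_neutral_right) (auto simp: f_def)
    then show ?thesis by (simp add: f_def)
  qed
  finally show ?thesis by (simp add: pr)
qed

lemma quad:
  fixes P :: "'b::finite \<Rightarrow> real" and d :: "'a::finite \<Rightarrow> 'b \<Rightarrow> real"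
  assumes S1: "(\<Sum>b\<in>UNIV. P b) = 1"
    and Sd: "\<And>i. (\<Sum>b\<in>UNIV. P b * d i b) = 0"
    and Sdd: "\<And>i k. (\<Sum>b\<in>UNIV. P b * (d i b * d k b)) = (if i = k then s i else 0)"
  shows "(\<Sum>b\<in>UNIV. P b * (c + (\<Sum>i\<in>UNIV. w i * d i b))\<^sup>2) = c\<^sup>2 + (\<Sum>i\<in>UNIV. (w i)\<^sup>2 * s i)"
proof -
  define S where "S = (\<lambda>b. \<Sum>i\<in>UNIV. w i * d i b)"
  define Q where "Q = (\<lambda>b. \<Sum>i\<in>UNIV. \<Sum>k\<in>UNIV. w i * w k * (d i b * d k b))"
  have SS: "S b * S b = Q b" for b
    unfolding S_def Q_def sum_product by (intro sum.cong refl) (simp add: mult_ac)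
  have sq: "P b * (c + S b)\<^sup>2 = c\<^sup>2 * P b + 2 * c * (P b * S b) + P b * Q b" for b
  proof -
    have "(c + S b)\<^sup>2 = c\<^sup>2 + 2 * c * S b + S b * S b" by (simp add: power2_eq_square algebra_simps)
    then show ?thesis unfolding SS by (simp add: algebra_simps)
  qed
  have A: "(\<Sum>b\<in>UNIV. P b * S b) = 0"
  proof -
    have "(\<Sum>b\<in>UNIV. P b * S b) = (\<Sum>i\<in>UNIV. \<Sum>b\<in>UNIV. P b * (w i * d i b))"
      unfolding S_def sum_distrib_left by (rule sum.swap)
    also have "\<dots> = (\<Sum>i\<in>UNIV. w i * (\<Sum>b\<in>UNIV. P b * d i b))"
      unfolding sum_distrib_left by (intro sum.cong refl) (simp add: mult_ac)
    also have "\<dots> = 0" by (simp add: Sd)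
    finally show ?thesis .
  qed
  have B: "(\<Sum>b\<in>UNIV. P b * Q b) = (\<Sum>i\<in>UNIV. (w i)\<^sup>2 * s i)"
  proof -
    have "(\<Sum>b\<in>UNIV. P b * Q b) = (\<Sum>b\<in>UNIV. \<Sum>i\<in>UNIV. \<Sum>k\<in>UNIV. P b * (w i * w k * (d i b * d k b)))"
      unfolding Q_def sum_distrib_left ..
    also have "\<dots> = (\<Sum>i\<in>UNIV. \<Sum>b\<in>UNIV. \<Sum>k\<in>UNIV. P b * (w i * w k * (d i b * d k b)))"
      by (rule sum.swap)
    also have "\<dots> = (\<Sum>i\<in>UNIV. \<Sum>k\<in>UNIV. \<Sum>b\<in>UNIV. P b * (w i * w k * (d i b * d k b)))"
      by (intro sum.cong refl sum.swap)
    also have "\<dots> = (\<Sum>i\<in>UNIV. \<Sum>k\<in>UNIV. w i * w k * (\<Sum>b\<in>UNIV. P b * (d i b * d k b)))"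
      unfolding sum_distrib_left by (intro sum.cong refl) (simp add: mult_ac)
    also have "\<dots> = (\<Sum>i\<in>UNIV. \<Sum>k\<in>UNIV. if k = i then w i * w i * s i else 0)"
      unfolding Sdd by (intro sum.cong refl) auto
    also have "\<dots> = (\<Sum>i\<in>UNIV. (w i)\<^sup>2 * s i)"
      by (simp add: power2_eq_square)
    finally show ?thesis .
  qed
  have "(\<Sum>b\<in>UNIV. P b * (c + (\<Sum>i\<in>UNIV. w i * d i b))\<^sup>2) = (\<Sum>b\<in>UNIV. P b * (c + S b)\<^sup>2)"
    unfolding S_def ..
  also have "\<dots> = c\<^sup>2 * (\<Sum>b\<in>UNIV. P b) + 2 * c * (\<Sum>b\<in>UNIV. P b * S b) + (\<Sum>b\<in>UNIV. P b * Q b)"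
    unfolding sq sum.distrib sum_distrib_left ..
  finally show ?thesis using A B S1 by simp
qed

theorem theorem1:
  fixes W1 W2 :: "real ^ 'n ^ 'n" and x y :: "real ^ 'n" and p :: real
  assumes "0 \<le> p" "p \<le> 1" "p \<noteq> 1/2"
  shows "measure_pmf.expectation (bern_mask p :: ('n \<Rightarrow> bool) pmf)
           (\<lambda>b. (norm (W2 *v AID b (W1 *v x) - y))\<^sup>2)
         \<ge> (norm (W2 *v rpv p (W1 *v x) - y))\<^sup>2
           + 4 * p * (1 - p) / (real CARD('n) * (2 * p - 1)\<^sup>2)
             * (norm (W2 *v ((1/2) *\<^sub>R (W1 *v x)) - W2 *v rpv p (W1 *v x)))\<^sup>2"
proof -
  define v where "v = W1 *v x"
  define M where "M = (bern_mask p :: ('n \<Rightarrow> bool) pmf)"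
  define P where "P = (\<lambda>b. pmf M b)"
  define g where "g = (\<lambda>i c. if 0 \<le> v$i then (if c then 1 else 0) else (if c then 0 else (1::real)))"
  define q where "q = (\<lambda>i. g i True * p + g i False * (1 - p))"
  define d where "d = (\<lambda>i b. (g i (b i) - q i) * v$i)"
  define c where "c = (\<lambda>j. (W2 *v rpv p v - y)$j)"
  define T where "T = (\<Sum>j\<in>UNIV. \<Sum>i\<in>UNIV. (W2$j$i)\<^sup>2 * (v$i)\<^sup>2)"
  have gnn: "\<And>i c. g i c \<ge> 0" by (simp add: g_def)
  have gg: "\<And>i c. g i c * g i c = g i c" by (simp add: g_def)
  have qq: "q i * (1 - q i) = p * (1 - p)" for i by (simp add: q_def g_def algebra_simps)
  have S1': "(\<Sum>b\<in>UNIV. P b) = 1" unfolding P_def by (rule S1)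
  have Sm: "(\<Sum>b\<in>UNIV. P b * g i (b i)) = q i" for i
    using E1[OF assms(1,2), of "g i" i] gnn unfolding P_def M_def q_def E_sum by simp
  have Smm: "(\<Sum>b\<in>UNIV. P b * (g i (b i) * g k (b k))) = q i * q k" if "i \<noteq> k" for i k
    using E2[OF assms(1,2) that, of "g i" "g k"] gnn unfolding P_def M_def q_def E_sum by simp
  have Sd: "(\<Sum>b\<in>UNIV. P b * d i b) = 0" for i
  proof -
    have "(\<Sum>b\<in>UNIV. P b * d i b) = v$i * (\<Sum>b\<in>UNIV. P b * g i (b i)) - v$i * q i * (\<Sum>b\<in>UNIV. P b)"
      by (simp add: d_def algebra_simps sum_subtractf sum_distrib_left)
    then show ?thesis by (simp add: Sm S1')
  qed
  have Sdd: "(\<Sum>b\<in>UNIV. P b * (d i b * d k b)) = (if i = k then p * (1 - p) * (v$i)\<^sup>2 else 0)" for i k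
  proof -
    have e: "(\<Sum>b\<in>UNIV. P b * (d i b * d k b)) = v$i * v$k * ((\<Sum>b\<in>UNIV. P b * (g i (b i) * g k (b k)))
       - q k * (\<Sum>b\<in>UNIV. P b * g i (b i)) - q i * (\<Sum>b\<in>UNIV. P b * g k (b k)) + q i * q k * (\<Sum>b\<in>UNIV. P b))"
      by (simp add: d_def algebra_simps sum_subtractf sum_distrib_left sum.distrib)
    show ?thesis
    proof (cases "i = k")
      case True
      have h: "q i - q i * q i = p * (1 - p)" using qq[of i] by (simp add: algebra_simps)
      have "(\<Sum>b\<in>UNIV. P b * (d i b * d k b)) = v$i * v$i * (q i - q i * q i)"
        unfolding e using True by (simp add: gg Sm S1' algebra_simps)
      also have "\<dots> = p * (1 - p) * (v$i)\<^sup>2" unfolding h by (simp add: power2_eq_square)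
      finally show ?thesis using True by simp
    next
      case False
      then show ?thesis unfolding e by (simp add: Smm Sm S1')
    qed
  qed
  have comp: "(W2 *v AID b v - y)$j = c j + (\<Sum>i\<in>UNIV. W2$j$i * d i b)" for b j
  proof -
    have r: "rp p (v$i) = q i * v$i" for i by (simp add: rp_def q_def g_def algebra_simps)
    have a: "AID b v $ i = g i (b i) * v$i" for i by (simp add: AID_def g_def)
    have s: "(\<Sum>i\<in>UNIV. W2$j$i * (g i (b i) * v$i)) = (\<Sum>i\<in>UNIV. W2$j$i * (q i * v$i))
        + (\<Sum>i\<in>UNIV. W2$j$i * ((g i (b i) - q i) * v$i))"
      by (subst sum.distrib[symmetric]) (rule sum.cong, auto simp: algebra_simps)
    show ?thesis
      unfolding c_def d_def by (simp add: matrix_vector_mult_def rpv_def r a s)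
  qed
  have L: "measure_pmf.expectation M (\<lambda>b. (norm (W2 *v AID b v - y))\<^sup>2)
       = (norm (W2 *v rpv p v - y))\<^sup>2 + p * (1 - p) * T"
  proof -
    have "measure_pmf.expectation M (\<lambda>b. (norm (W2 *v AID b v - y))\<^sup>2)
       = (\<Sum>b\<in>UNIV. P b * (\<Sum>j\<in>UNIV. (c j + (\<Sum>i\<in>UNIV. W2$j$i * d i b))\<^sup>2))"
      unfolding E_sum P_def norm2 comp ..
    also have "\<dots> = (\<Sum>j\<in>UNIV. \<Sum>b\<in>UNIV. P b * (c j + (\<Sum>i\<in>UNIV. W2$j$i * d i b))\<^sup>2)"
      unfolding sum_distrib_left by (rule sum.swap)
    also have "\<dots> = (\<Sum>j\<in>UNIV. (c j)\<^sup>2 + (\<Sum>i\<in>UNIV. (W2$j$i)\<^sup>2 * (p * (1 - p) * (v$i)\<^sup>2)))"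
      by (rule sum.cong[OF refl], rule quad[OF S1' Sd Sdd])
    also have "\<dots> = (norm (W2 *v rpv p v - y))\<^sup>2 + p * (1 - p) * T"
    proof -
      have "(norm (W2 *v rpv p v - y))\<^sup>2 = (\<Sum>j\<in>UNIV. (c j)\<^sup>2)" unfolding norm2 c_def ..
      then show ?thesis by (simp add: sum.distrib T_def sum_distrib_left mult_ac)
    qed
    finally show ?thesis .
  qed
  define R where "R = (norm (W2 *v ((1/2) *\<^sub>R v) - W2 *v rpv p v))\<^sup>2"
  have R1: "R = (p - 1/2)\<^sup>2 * (\<Sum>j\<in>UNIV. (\<Sum>i\<in>UNIV. W2$j$i * \<bar>v$i\<bar>)\<^sup>2)"
  proof -
    have h: "(W2 *v ((1/2) *\<^sub>R v) - W2 *v rpv p v)$j = - (p - 1/2) * (\<Sum>i\<in>UNIV. W2$j$i * \<bar>v$i\<bar>)" for j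
      unfolding matrix_vector_mult_def rpv_def vec_lambda_beta vector_minus_component vector_scaleR_component
        sum_subtractf[symmetric] sum_distrib_left
      by (rule sum.cong[OF refl]) (simp add: rp_def algebra_simps)
    show ?thesis unfolding R_def norm2 sum_distrib_left
      by (rule sum.cong[OF refl]) (unfold h, simp add: power_mult_distrib power2_commute[of "1/2" p])
  qed
  have R2: "(\<Sum>j\<in>UNIV. (\<Sum>i\<in>UNIV. W2$j$i * \<bar>v$i\<bar>)\<^sup>2) \<le> real CARD('n) * T"
  proof -
    have "(\<Sum>j\<in>UNIV. (\<Sum>i\<in>UNIV. W2$j$i * \<bar>v$i\<bar>)\<^sup>2) \<le> (\<Sum>j\<in>UNIV. (\<Sum>i\<in>UNIV. (W2$j$i * \<bar>v$i\<bar>)\<^sup>2) * real CARD('n))"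
      by (rule sum_mono, rule sum_squared_le_sum_of_squares)
    also have "\<dots> = real CARD('n) * T"
      by (simp add: T_def sum_distrib_left sum_distrib_right power_mult_distrib mult_ac)
    finally show ?thesis .
  qed
  have n0: "real CARD('n) > 0" by simp
  have p0: "(2 * p - 1)\<^sup>2 > 0" using assms(3) by simp
  have pp: "p * (1 - p) \<ge> 0" using assms(1,2) by simp
  have "4 * p * (1 - p) / (real CARD('n) * (2 * p - 1)\<^sup>2) * R
      \<le> 4 * p * (1 - p) / (real CARD('n) * (2 * p - 1)\<^sup>2) * ((p - 1/2)\<^sup>2 * (real CARD('n) * T))"
    unfolding R1 using R2 pp n0 p0
    by (intro mult_left_mono) (auto intro!: divide_nonneg_pos mult_left_mono)
  also have "\<dots> = p * (1 - p) * T"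
  proof -
    have e: "(p - 1/2)\<^sup>2 = (2 * p - 1)\<^sup>2 / 4" by (simp add: power2_eq_square field_simps)
    have k: "\<And>N D. N > 0 \<Longrightarrow> D > 0 \<Longrightarrow> 4 * p * (1 - p) / (N * D) * (D / 4 * (N * T)) = p * (1 - p) * T"
      by (simp add: field_simps)
    show ?thesis unfolding e by (rule k[OF n0 p0])
  qed
  finally have "4 * p * (1 - p) / (real CARD('n) * (2 * p - 1)\<^sup>2) * R \<le> p * (1 - p) * T" .
  then show ?thesis using L unfolding M_def R_def v_def by linarith
qed

end
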